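(* Let $\mathcal{H}$ be a real Hilbert space, $N\ge2$, $\theta\in(0,1)$, $\Gamma\subseteq\mathbb{R}_{++}$ a nonempty closed interval, and for $\gamma\in\Gamma$ let $T_\gamma:\mathcal{H}^{N-1}\to\mathcal{H}^{N-1}$ be the Malitsky--Tam operator defined in the context. Suppose one of the following holds: (a) $A_1,\dots,A_{N-1}:\mathcal{H}\to\mathcal{H}$ are monotone and $L$-Lipschitz, and $A_N:\mathcal{H}\rightrightarrows\mathcal{H}$ is maximally $\mu$-strongly monotone; (b) $A_1,\dots,A_{N-1}:\mathcal{H}\to\mathcal{H}$ are maximally $\mu$-strongly monotone and $L$-Lipschitz, and $A_N:\mathcal{H}\rightrightarrows\mathcal{H}$ is maximally monotone. Then there exists $\beta\in[0,1)$ such that every $T_\gamma$, $\gamma\in\Gamma$, is a $\beta$-contraction.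
   Context: $J_A=(\mathrm{Id}+A)^{-1}$. Malitsky--Tam operator: for $\mathbf{x}=(x^1,\dots,x^{N-1})\in\mathcal{H}^{N-1}$, set $z^1=J_{\gamma A_1}x^1$, $z^i=J_{\gamma A_i}(z^{i-1}+x^i-x^{i-1})$ for $i=2,\dots,N-1$, $z^N=J_{\gamma A_N}(z^1+z^{N-1}-x^{N-1})$, and $T_\gamma\mathbf{x}=\mathbf{x}+\theta(z^2-z^1,\dots,z^N-z^{N-1})$. An operator $A$ is $\mu$-strongly monotone if $\langle x-y,u-v\rangle\ge\mu\|x-y\|^2$ for all $(x,u),(y,v)\in\operatorname{gra}A$. A $\beta$-contraction satisfies $\|T\mathbf{x}-T\mathbf{y}\|\le\beta\|\mathbf{x}-\mathbf{y}\|$ in the product norm of $\mathcal{H}^{N-1}$. *)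

theory Defs
  imports "HOL-Analysis.Analysis"
begin

definition gra :: "('a \<Rightarrow> 'a set) \<Rightarrow> ('a \<times> 'a) set" where
  "gra A = {(x, u). u \<in> A x}"

definition monotone_op :: "('a::real_inner \<Rightarrow> 'a set) \<Rightarrow> bool" where
  "monotone_op A \<longleftrightarrow> (\<forall>x y u v. u \<in> A x \<longrightarrow> v \<in> A y \<longrightarrow> inner (x - y) (u - v) \<ge> 0)"

definition strongly_monotone_op :: "real \<Rightarrow> ('a::real_inner \<Rightarrow> 'a set) \<Rightarrow> bool" where
  "strongly_monotone_op \<mu> A \<longleftrightarrow>
     (\<forall>x y u v. u \<in> A x \<longrightarrow> v \<in> A y \<longrightarrow> inner (x - y) (u - v) \<ge> \<mu> * (norm (x - y))\<^sup>2)"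

definition maximally_monotone_op :: "('a::real_inner \<Rightarrow> 'a set) \<Rightarrow> bool" where
  "maximally_monotone_op A \<longleftrightarrow> monotone_op A \<and>
     (\<forall>B. monotone_op B \<and> gra A \<subseteq> gra B \<longrightarrow> gra B = gra A)"

definition maximally_strongly_monotone_op :: "real \<Rightarrow> ('a::real_inner \<Rightarrow> 'a set) \<Rightarrow> bool" where
  "maximally_strongly_monotone_op \<mu> A \<longleftrightarrow> strongly_monotone_op \<mu> A \<and> maximally_monotone_op A"

text \<open>Resolvent of gamma A: J(x) = (Id + gamma A)^{-1}(x), i.e. the unique z with x \<in> z + gamma A z
  (single-valued and everywhere defined for maximally monotone A).\<close>
definition resolvent :: "real \<Rightarrow> ('a::real_vector \<Rightarrow> 'a set) \<Rightarrow> 'a \<Rightarrow> 'a" where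
  "resolvent \<gamma> A x = (THE z. \<exists>u \<in> A z. x = z + \<gamma> *\<^sub>R u)"

text \<open>Points of H^{N-1} are functions nat \<Rightarrow> 'a, only indices 1..N-1 being relevant.
  mt_zpre computes z^1, ..., z^{N-1}.\<close>
primrec mt_zpre :: "real \<Rightarrow> (nat \<Rightarrow> 'a::real_vector \<Rightarrow> 'a set) \<Rightarrow> (nat \<Rightarrow> 'a) \<Rightarrow> nat \<Rightarrow> 'a" where
  "mt_zpre \<gamma> A x 0 = 0"
| "mt_zpre \<gamma> A x (Suc i) =
     (if i = 0 then resolvent \<gamma> (A 1) (x 1)
      else resolvent \<gamma> (A (Suc i)) (mt_zpre \<gamma> A x i + x (Suc i) - x i))"

definition mt_z :: "nat \<Rightarrow> real \<Rightarrow> (nat \<Rightarrow> 'a::real_vector \<Rightarrow> 'a set) \<Rightarrow> (nat \<Rightarrow> 'a) \<Rightarrow> nat \<Rightarrow> 'a" where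
  "mt_z N \<gamma> A x i =
     (if i = N then resolvent \<gamma> (A N) (mt_zpre \<gamma> A x 1 + mt_zpre \<gamma> A x (N - 1) - x (N - 1))
      else mt_zpre \<gamma> A x i)"

definition malitsky_tam :: "nat \<Rightarrow> real \<Rightarrow> real \<Rightarrow> (nat \<Rightarrow> 'a::real_vector \<Rightarrow> 'a set) \<Rightarrow> (nat \<Rightarrow> 'a) \<Rightarrow> (nat \<Rightarrow> 'a)" where
  "malitsky_tam N \<theta> \<gamma> A x =
     (\<lambda>i. if i \<in> {1..N - 1} then x i + \<theta> *\<^sub>R (mt_z N \<gamma> A x (Suc i) - mt_z N \<gamma> A x i) else 0)"

definition prod_norm :: "nat \<Rightarrow> (nat \<Rightarrow> 'a::real_normed_vector) \<Rightarrow> real" where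
  "prod_norm N x = sqrt (\<Sum>i\<in>{1..N - 1}. (norm (x i))\<^sup>2)"

end

theory Submission
  imports Defs
begin
lemma strong_min_exists:
  fixes \<phi> :: "'a::{real_inner,complete_space} \<Rightarrow> real"
  assumes lb: "\<And>q. c \<le> \<phi> q"
  and mid: "\<And>p q. \<phi> ((1/2) *\<^sub>R (p + q)) \<le> (\<phi> p + \<phi> q)/2 - (norm (p - q))\<^sup>2/4"
  and lsc: "\<And>s l d. s \<longlonglongrightarrow> l \<Longrightarrow> (\<And>n. \<phi> (s n) \<le> d + 1/real (Suc n)) \<Longrightarrow> \<phi> l \<le> d"
  shows "\<exists>q0. \<forall>q. \<phi> q0 \<le> \<phi> q"
proof -
  define m0 where "m0 = Inf (range \<phi>)"
  have bdd: "bdd_below (range \<phi>)" using lb by (auto intro!: bdd_belowI[where m=c])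
  have m0le: "m0 \<le> \<phi> q" for q unfolding m0_def by (rule cInf_lower[OF _ bdd]) auto
  have "\<exists>q. \<phi> q < m0 + 1/real (Suc n)" for n
  proof -
    have "Inf (range \<phi>) < Inf (range \<phi>) + 1/real (Suc n)" by simp
    then have "\<exists>x\<in>range \<phi>. x < Inf (range \<phi>) + 1/real (Suc n)"
      by (subst (asm) cInf_less_iff[OF _ bdd]) auto
    then show ?thesis unfolding m0_def by auto
  qed
  then obtain s where s: "\<And>n. \<phi> (s n) < m0 + 1/real (Suc n)" by metis
  have key: "(norm (s n - s m))\<^sup>2 \<le> 4 / real (Suc N)" if "n \<ge> N" "m \<ge> N" for n m N
  proof -
    have "m0 \<le> \<phi> ((1/2) *\<^sub>R (s n + s m))" by (rule m0le)
    also have "\<dots> \<le> (\<phi> (s n) + \<phi> (s m))/2 - (norm (s n - s m))\<^sup>2/4" by (rule mid)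
    finally have "(norm (s n - s m))\<^sup>2 \<le> 2 * (\<phi> (s n) + \<phi> (s m)) - 4 * m0" by linarith
    also have "\<dots> \<le> 2 * (1/real (Suc n) + 1/real (Suc m))" using s[of n] s[of m] by simp
    also have "\<dots> \<le> 2 * (1/real (Suc N) + 1/real (Suc N))"
      using that by (intro mult_left_mono add_mono) (auto simp: frac_le)
    finally show ?thesis by simp
  qed
  have "Cauchy s"
  proof (rule metric_CauchyI)
    fix e :: real assume e: "e > 0"
    obtain M :: nat where M: "4 / e\<^sup>2 < real M" using reals_Archimedean2 by blast
    have "4 / real (Suc M) < e\<^sup>2"
    proof -
      have "4 < e\<^sup>2 * real M" using M e by (simp add: field_simps)
      also have "\<dots> \<le> e\<^sup>2 * real (Suc M)" using e by simp
      finally show ?thesis by (simp add: field_simps)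
    qed
    show "\<exists>M. \<forall>m\<ge>M. \<forall>n\<ge>M. dist (s m) (s n) < e"
    proof (intro exI allI impI)
      fix m n assume "m \<ge> M" "n \<ge> M"
      then have "(dist (s m) (s n))\<^sup>2 < e\<^sup>2" using key[of M m n] \<open>4 / real (Suc M) < e\<^sup>2\<close>
        by (simp add: dist_norm)
      then show "dist (s m) (s n) < e" using e by (simp add: power_less_imp_less_base)
    qed
  qed
  then obtain l where l: "s \<longlonglongrightarrow> l" using Cauchy_convergent_iff convergent_def by blast
  have "\<phi> l \<le> m0" using lsc[OF l, of m0] s by (simp add: less_imp_le)
  then show ?thesis using m0le by (meson order_trans)
qed

definition mf :: "('a::real_inner \<times> 'a) \<Rightarrow> 'a \<Rightarrow> real" where
  "mf k q = inner (q - fst k) (q + snd k)"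

lemma mf_expand: "mf k q = (norm q)\<^sup>2 + inner q (snd k - fst k) - inner (fst k) (snd k)"
  unfolding mf_def by (simp add: inner_diff_left inner_diff_right inner_add_left inner_add_right
      power2_norm_eq_inner inner_commute algebra_simps)

lemma mf_shift: "mf k (q - t *\<^sub>R w) = mf k q - t * inner w (2 *\<^sub>R q + snd k - fst k) + t\<^sup>2 * (norm w)\<^sup>2"
  unfolding mf_expand by (simp add: inner_diff_left inner_diff_right inner_add_left inner_add_right
      power2_norm_eq_inner inner_commute algebra_simps inner_scaleR_left inner_scaleR_right) (simp add: power2_eq_square field_simps)

lemma mf_mid: "mf k ((1/2) *\<^sub>R (p + q)) = (mf k p + mf k q)/2 - (norm (p - q))\<^sup>2/4"
  unfolding mf_expand by (simp add: inner_diff_left inner_diff_right inner_add_left inner_add_right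
      power2_norm_eq_inner inner_commute algebra_simps inner_scaleR_left inner_scaleR_right) (simp add: power2_eq_square field_simps)

lemma mf_lb: "- (norm (snd k - fst k))\<^sup>2/4 - inner (fst k) (snd k) \<le> mf k q"
proof -
  have "mf k q = (norm (q + (1/2) *\<^sub>R (snd k - fst k)))\<^sup>2 - (norm (snd k - fst k))\<^sup>2/4 - inner (fst k) (snd k)"
    unfolding mf_expand by (simp add: inner_diff_left inner_diff_right inner_add_left inner_add_right
      power2_norm_eq_inner inner_commute algebra_simps inner_scaleR_left inner_scaleR_right) (simp add: power2_eq_square field_simps)
  then show ?thesis by simp
qed

lemma mf_cont: "f \<longlonglongrightarrow> l \<Longrightarrow> (\<lambda>n. mf k (f n)) \<longlonglongrightarrow> mf k l"
  unfolding mf_def by (intro tendsto_intros)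

lemma min_norm_vi:
  fixes w y :: "'a::real_inner"
  assumes "convex C" "w \<in> C" "y \<in> C" "\<forall>z\<in>C. norm w \<le> norm z"
  shows "(norm w)\<^sup>2 \<le> inner y w"
proof (rule ccontr)
  assume "\<not> ?thesis"
  then have a: "inner w (y - w) < 0" by (simp add: inner_diff_right power2_norm_eq_inner inner_commute)
  then have yw: "y \<noteq> w" by auto
  define d where "d = (norm (y - w))\<^sup>2"
  have d: "d > 0" using yw by (simp add: d_def)
  define t where "t = min 1 (- inner w (y - w) / d)"
  have t0: "0 < t" "t \<le> 1" using a d by (auto simp: t_def divide_neg_pos)
  have tle: "t * d \<le> - inner w (y - w)" using d by (simp add: t_def min_def field_simps)
  have "w + t *\<^sub>R (y - w) \<in> C"
  proof -
    have "(1 - t) *\<^sub>R w + t *\<^sub>R y \<in> C" using assms(1-3) t0 by (simp add: convexD)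
    also have "(1 - t) *\<^sub>R w + t *\<^sub>R y = w + t *\<^sub>R (y - w)" by (simp add: algebra_simps)
    finally show ?thesis .
  qed
  then have "(norm w)\<^sup>2 \<le> (norm (w + t *\<^sub>R (y - w)))\<^sup>2" using assms(4) by simp
  also have "\<dots> = (norm w)\<^sup>2 + t * (2 * inner w (y - w) + t * d)"
    by (simp add: d_def power2_norm_eq_inner inner_add_left inner_add_right inner_diff_left inner_diff_right inner_commute algebra_simps)
  finally have "0 \<le> t * (2 * inner w (y - w) + t * d)" by simp
  moreover have "2 * inner w (y - w) + t * d < 0" using tle a by linarith
  ultimately show False using t0 by (simp add: mult_less_0_iff zero_le_mult_iff)
qed

lemma finite_KL:
  fixes F :: "('a::{real_inner,complete_space} \<times> 'a) set"
  assumes fin: "finite F" and ne: "F \<noteq> {}"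
    and mono: "\<And>k j. k \<in> F \<Longrightarrow> j \<in> F \<Longrightarrow> 0 \<le> inner (fst k - fst j) (snd k - snd j)"
  shows "\<exists>q0 m. m \<le> 0 \<and> (\<forall>k\<in>F. mf k q0 \<le> m) \<and> (\<forall>q. \<exists>k\<in>F. m + (norm (q - q0))\<^sup>2 \<le> mf k q)"
proof -
  define \<phi> where "\<phi> q = Max ((\<lambda>k. mf k q) ` F)" for q
  have \<phi>ge: "mf k q \<le> \<phi> q" if "k \<in> F" for k q unfolding \<phi>_def using fin that by (auto intro: Max_ge)
  have \<phi>in: "\<exists>k\<in>F. \<phi> q = mf k q" for q
  proof -
    have "Max ((\<lambda>k. mf k q) ` F) \<in> (\<lambda>k. mf k q) ` F" using fin ne by (intro Max_in) auto
    then obtain k where "k \<in> F" "Max ((\<lambda>k. mf k q) ` F) = mf k q" by blast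
    then show ?thesis unfolding \<phi>_def by blast
  qed
  obtain k0 where k0: "k0 \<in> F" using ne by auto
  have "\<exists>q0. \<forall>q. \<phi> q0 \<le> \<phi> q"
  proof (rule strong_min_exists[where c = "- (norm (snd k0 - fst k0))\<^sup>2/4 - inner (fst k0) (snd k0)"])
    fix q show "- (norm (snd k0 - fst k0))\<^sup>2/4 - inner (fst k0) (snd k0) \<le> \<phi> q"
      using mf_lb[of k0 q] \<phi>ge[OF k0, of q] by linarith
  next
    fix p q :: 'a
    obtain k where k: "k\<in>F" "\<phi> ((1/2) *\<^sub>R (p+q)) = mf k ((1/2) *\<^sub>R (p+q))" using \<phi>in by blast
    then show "\<phi> ((1/2) *\<^sub>R (p + q)) \<le> (\<phi> p + \<phi> q)/2 - (norm (p - q))\<^sup>2/4"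
    proof -
      have h1: "mf k p \<le> \<phi> p" "mf k q \<le> \<phi> q" using \<phi>ge[OF k(1)] by auto
      have "\<phi> ((1/2) *\<^sub>R (p+q)) = (mf k p + mf k q)/2 - (norm (p - q))\<^sup>2/4"
        using k(2) mf_mid[of k p q] by simp
      also have "\<dots> \<le> (\<phi> p + \<phi> q)/2 - (norm (p - q))\<^sup>2/4" using h1 by simp
      finally show ?thesis .
    qed
  next
    fix s l d assume sl: "s \<longlonglongrightarrow> l" and sd: "\<And>n. \<phi> (s n) \<le> d + 1/real (Suc n)"
    have "mf k l \<le> d" if k: "k \<in> F" for k
    proof (rule LIMSEQ_le[OF mf_cont[OF sl]])
      have "(\<lambda>n. d + inverse (real (Suc n))) \<longlonglongrightarrow> d + 0"
        by (intro tendsto_intros LIMSEQ_inverse_real_of_nat)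
      then show "(\<lambda>n. d + 1/real (Suc n)) \<longlonglongrightarrow> d" by (simp add: inverse_eq_divide)
      show "\<exists>N. \<forall>n\<ge>N. mf k (s n) \<le> d + 1/real (Suc n)" using \<phi>ge[OF k] sd order_trans by blast
    qed
    then show "\<phi> l \<le> d" using \<phi>in by metis
  qed
  then obtain q0 where q0: "\<And>q. \<phi> q0 \<le> \<phi> q" by blast
  define m where "m = \<phi> q0"
  define K where "K = {k\<in>F. mf k q0 = m}"
  have Kne: "K \<noteq> {}" using \<phi>in[of q0] unfolding K_def m_def by force
  have finK: "finite K" using fin by (simp add: K_def)
  have KF: "K \<subseteq> F" by (auto simp: K_def)
  have mK: "mf k q0 = m" if "k \<in> K" for k using that by (simp add: K_def)
  define g where "g k = 2 *\<^sub>R q0 + snd k - fst k" for k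
  define C where "C = convex hull (g ` K)"
  have "compact C" unfolding C_def by (rule finite_imp_compact_convex_hull) (use finK in auto)
  moreover have "C \<noteq> {}" using Kne by (simp add: C_def)
  ultimately obtain w where w: "w \<in> C" "\<forall>y\<in>C. norm w \<le> norm y"
    using continuous_attains_inf[of C norm] continuous_on_norm_id by blast
  have w0: "w = 0"
  proof (rule ccontr)
    assume wne: "w \<noteq> 0"
    have gw: "(norm w)\<^sup>2 \<le> inner w (g k)" if "k \<in> K" for k
      using min_norm_vi[of C w "g k"] w that convex_convex_hull hull_inc[of "g k" "g ` K"]
      unfolding C_def by (auto simp: inner_commute)
    have ev: "\<forall>k\<in>F. eventually (\<lambda>t. mf k (q0 - t *\<^sub>R w) < m) (at_right 0)"
    proof
      fix k assume k: "k \<in> F"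
      show "eventually (\<lambda>t. mf k (q0 - t *\<^sub>R w) < m) (at_right 0)"
      proof (cases "k \<in> K")
        case True
        have "eventually (\<lambda>t. t \<in> {0<..<1}) (at_right (0::real))" by (rule eventually_at_right_real) simp
        then show ?thesis
        proof (rule eventually_mono)
          fix t :: real assume t: "t \<in> {0<..<1}"
          have eq: "mf k (q0 - t *\<^sub>R w) = m - t * inner w (g k) + t\<^sup>2 * (norm w)\<^sup>2"
            using mf_shift[of k q0 t w] mK[OF True] by (simp add: g_def)
          have "t * (norm w)\<^sup>2 \<le> t * inner w (g k)" using gw[OF True] t by (simp add: mult_left_mono)
          moreover have "t\<^sup>2 * (norm w)\<^sup>2 < t * (norm w)\<^sup>2"
            using t wne by (simp add: power2_eq_square)
          ultimately show "mf k (q0 - t *\<^sub>R w) < m" using eq by linarith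
        qed
      next
        case False
        then have lt: "mf k q0 < m" using \<phi>ge[OF k, of q0] k by (auto simp: K_def m_def)
        have "((\<lambda>t. inner (q0 - t *\<^sub>R w - fst k) (q0 - t *\<^sub>R w + snd k)) \<longlongrightarrow>
               inner (q0 - 0 *\<^sub>R w - fst k) (q0 - 0 *\<^sub>R w + snd k)) (at_right 0)"
          by (intro tendsto_intros)
        then have "((\<lambda>t. mf k (q0 - t *\<^sub>R w)) \<longlongrightarrow> mf k q0) (at_right 0)" by (simp add: mf_def)
        then show ?thesis using lt by (rule order_tendstoD)
      qed
    qed
    have "eventually (\<lambda>t. \<forall>k\<in>F. mf k (q0 - t *\<^sub>R w) < m) (at_right 0)"
      by (rule eventually_ball_finite[OF fin ev])
    then obtain t :: real where t: "\<forall>k\<in>F. mf k (q0 - t *\<^sub>R w) < m"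
      using eventually_happens'[of "at_right (0::real)"] by auto
    then have "\<phi> (q0 - t *\<^sub>R w) < m" using \<phi>in by metis
    with q0 show False by (metis m_def not_le)
  qed
  define C' where "C' = {y. \<exists>l. (\<forall>k\<in>K. 0 \<le> l k) \<and> sum l K = 1 \<and> y = (\<Sum>k\<in>K. l k *\<^sub>R g k)}"
  have "convex C'"
  proof (rule convexI)
    fix y1 y2 u v :: real
    fix y1 y2 assume "y1 \<in> C'" "y2 \<in> C'" and uv: "0 \<le> u" "0 \<le> v" "u + v = 1"
    then obtain l1 l2 where l1: "\<forall>k\<in>K. 0 \<le> l1 k" "sum l1 K = 1" "y1 = (\<Sum>k\<in>K. l1 k *\<^sub>R g k)"
      and l2: "\<forall>k\<in>K. 0 \<le> l2 k" "sum l2 K = 1" "y2 = (\<Sum>k\<in>K. l2 k *\<^sub>R g k)"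
      unfolding C'_def by blast
    show "u *\<^sub>R y1 + v *\<^sub>R y2 \<in> C'"
      unfolding C'_def
    proof (intro CollectI exI conjI ballI)
      show "0 \<le> u * l1 k + v * l2 k" if "k \<in> K" for k using l1 l2 uv that by simp
      show "(\<Sum>k\<in>K. u * l1 k + v * l2 k) = 1"
        using l1 l2 uv by (simp add: sum.distrib sum_distrib_left[symmetric])
      show "u *\<^sub>R y1 + v *\<^sub>R y2 = (\<Sum>k\<in>K. (u * l1 k + v * l2 k) *\<^sub>R g k)"
        using l1 l2 by (simp add: scaleR_add_left sum.distrib scaleR_sum_right)
    qed
  qed
  moreover have "g ` K \<subseteq> C'"
  proof
    fix y assume "y \<in> g ` K"
    then obtain k where k: "k \<in> K" "y = g k" by auto
    have "(\<Sum>j\<in>K. (if j = k then 1 else 0) *\<^sub>R g j) = (\<Sum>j\<in>K. if j = k then g j else 0)"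
      by (rule sum.cong) auto
    also have "\<dots> = g k" using k finK by simp
    finally show "y \<in> C'" unfolding C'_def
      by (intro CollectI exI[of _ "\<lambda>j. if j = k then 1 else 0"]) (use k finK in auto)
  qed
  ultimately have "C \<subseteq> C'" unfolding C_def by (rule hull_minimal[rotated])
  then have "0 \<in> C'" using w w0 by auto
  then obtain l where l0: "\<And>k. k \<in> K \<Longrightarrow> 0 \<le> l k" and l1: "sum l K = 1"
    and lg: "(\<Sum>k\<in>K. l k *\<^sub>R g k) = 0" unfolding C'_def by auto
  define xb where "xb = (\<Sum>k\<in>K. l k *\<^sub>R fst k)"
  define vb where "vb = (\<Sum>k\<in>K. l k *\<^sub>R snd k)"
  define c where "c = (\<Sum>k\<in>K. l k * inner (fst k) (snd k))"
  have h0: "(\<Sum>k\<in>K. l k *\<^sub>R (2 *\<^sub>R q0) + (l k *\<^sub>R snd k - l k *\<^sub>R fst k)) = 0"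
    using lg by (simp add: g_def algebra_simps)
  moreover have "(\<Sum>k\<in>K. l k *\<^sub>R (2 *\<^sub>R q0) + (l k *\<^sub>R snd k - l k *\<^sub>R fst k))
      = (\<Sum>k\<in>K. l k) *\<^sub>R (2 *\<^sub>R q0) + (vb - xb)"
    by (simp only: sum.distrib sum_subtractf scaleR_sum_left xb_def vb_def)
  ultimately have h1: "2 *\<^sub>R q0 + (vb - xb) = 0" using l1 by simp
  have q0eq: "2 *\<^sub>R q0 = xb - vb"
  proof -
    have "2 *\<^sub>R q0 = (2 *\<^sub>R q0 + (vb - xb)) + (xb - vb)" by simp
    also have "\<dots> = xb - vb" using h1 by simp
    finally show ?thesis .
  qed
  have Sq: "(\<Sum>k\<in>K. l k * mf k q) = (norm q)\<^sup>2 - 2 * inner q q0 - c" for q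
  proof -
    have "(\<Sum>k\<in>K. l k * mf k q) = (\<Sum>k\<in>K. l k * (norm q)\<^sup>2 + inner q (l k *\<^sub>R (snd k - fst k)) - l k * inner (fst k) (snd k))"
      by (rule sum.cong) (simp_all add: mf_expand algebra_simps)
    also have "\<dots> = (\<Sum>k\<in>K. l k) * (norm q)\<^sup>2 + (\<Sum>k\<in>K. inner q (l k *\<^sub>R (snd k - fst k))) - c"
      by (simp add: sum.distrib sum_subtractf sum_distrib_right c_def)
    also have "(\<Sum>k\<in>K. inner q (l k *\<^sub>R (snd k - fst k))) = inner q (vb - xb)"
      by (simp add: inner_sum_right[symmetric] scaleR_diff_right sum_subtractf xb_def vb_def)
    also have "vb - xb = - (2 *\<^sub>R q0)" using q0eq by simp
    finally show ?thesis using l1 by simp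
  qed
  have Sq0: "(\<Sum>k\<in>K. l k * mf k q0) = m"
  proof -
    have "(\<Sum>k\<in>K. l k * mf k q0) = (\<Sum>k\<in>K. l k * m)" by (rule sum.cong) (simp_all add: mK)
    also have "\<dots> = m" using l1 by (simp add: sum_distrib_right[symmetric])
    finally show ?thesis .
  qed
  have mval: "m = - (norm q0)\<^sup>2 - c" using Sq[of q0] Sq0 by (simp add: power2_norm_eq_inner)
  have T1: "(\<Sum>k\<in>K. \<Sum>j\<in>K. l k * l j * inner (fst k) (snd k)) = c"
  proof -
    have "(\<Sum>j\<in>K. l k * l j * inner (fst k) (snd k)) = l k * inner (fst k) (snd k)" for k
    proof -
      have "(\<Sum>j\<in>K. l k * l j * inner (fst k) (snd k)) = (\<Sum>j\<in>K. (l k * inner (fst k) (snd k)) * l j)"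
        by (simp add: mult_ac)
      also have "\<dots> = l k * inner (fst k) (snd k) * sum l K" by (simp add: sum_distrib_left)
      finally show ?thesis using l1 by simp
    qed
    then show ?thesis by (simp add: c_def)
  qed
  have T2: "(\<Sum>k\<in>K. \<Sum>j\<in>K. l k * l j * inner (fst k) (snd j)) = inner xb vb"
  proof -
    have "inner xb vb = (\<Sum>k\<in>K. l k * inner (fst k) vb)" by (simp add: xb_def inner_sum_left)
    also have "\<dots> = (\<Sum>k\<in>K. l k * (\<Sum>j\<in>K. l j * inner (fst k) (snd j)))"
      by (simp add: vb_def inner_sum_right)
    also have "\<dots> = (\<Sum>k\<in>K. \<Sum>j\<in>K. l k * l j * inner (fst k) (snd j))"
      by (simp add: sum_distrib_left mult.assoc)
    finally show ?thesis by simp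
  qed
  have T3: "(\<Sum>k\<in>K. \<Sum>j\<in>K. l k * l j * inner (fst j) (snd k)) = inner xb vb"
  proof -
    have "(\<Sum>k\<in>K. \<Sum>j\<in>K. l k * l j * inner (fst j) (snd k)) = (\<Sum>j\<in>K. \<Sum>k\<in>K. l k * l j * inner (fst j) (snd k))"
      by (rule sum.swap)
    also have "\<dots> = (\<Sum>j\<in>K. \<Sum>k\<in>K. l j * l k * inner (fst j) (snd k))" by (simp add: mult_ac)
    also have "\<dots> = inner xb vb" by (rule T2)
    finally show ?thesis .
  qed
  have T4: "(\<Sum>k\<in>K. \<Sum>j\<in>K. l k * l j * inner (fst j) (snd j)) = c"
  proof -
    have "(\<Sum>k\<in>K. \<Sum>j\<in>K. l k * l j * inner (fst j) (snd j)) = (\<Sum>j\<in>K. \<Sum>k\<in>K. l k * l j * inner (fst j) (snd j))"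
      by (rule sum.swap)
    also have "\<dots> = (\<Sum>j\<in>K. \<Sum>k\<in>K. l j * l k * inner (fst j) (snd j))" by (simp add: mult_ac)
    also have "\<dots> = c" by (rule T1)
    finally show ?thesis .
  qed
  have cxv: "inner xb vb \<le> c"
  proof -
    have "0 \<le> (\<Sum>k\<in>K. \<Sum>j\<in>K. l k * l j * inner (fst k - fst j) (snd k - snd j))"
      by (intro sum_nonneg mult_nonneg_nonneg; use l0 KF mono in blast)
    also have "\<dots> = (\<Sum>k\<in>K. \<Sum>j\<in>K. l k * l j * inner (fst k) (snd k)) - (\<Sum>k\<in>K. \<Sum>j\<in>K. l k * l j * inner (fst k) (snd j))
        - (\<Sum>k\<in>K. \<Sum>j\<in>K. l k * l j * inner (fst j) (snd k)) + (\<Sum>k\<in>K. \<Sum>j\<in>K. l k * l j * inner (fst j) (snd j))"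
      by (simp add: inner_diff_left inner_diff_right algebra_simps sum.distrib sum_subtractf)
    finally show ?thesis unfolding T1 T2 T3 T4 by simp
  qed
  have n4: "4 * (norm q0)\<^sup>2 = (norm (xb - vb))\<^sup>2"
  proof -
    have "(norm (xb - vb))\<^sup>2 = (norm (2 *\<^sub>R q0))\<^sup>2" using q0eq by simp
    also have "\<dots> = 4 * (norm q0)\<^sup>2" by (simp add: power2_eq_square)
    finally show ?thesis by simp
  qed
  have pol: "(norm (xb - vb))\<^sup>2 + 4 * inner xb vb = (norm (xb + vb))\<^sup>2"
    by (simp add: power2_norm_eq_inner inner_add_left inner_add_right inner_diff_left inner_diff_right inner_commute algebra_simps)
  have mle0: "m \<le> 0"
  proof -
    have "0 \<le> (norm (xb + vb))\<^sup>2" by simp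
    then show ?thesis using mval n4 pol cxv by linarith
  qed
  have final: "\<exists>k\<in>F. m + (norm (q - q0))\<^sup>2 \<le> mf k q" for q
  proof -
    have "Max ((\<lambda>k. mf k q) ` K) \<in> (\<lambda>k. mf k q) ` K" using finK Kne by (intro Max_in) auto
    then obtain k where k: "k \<in> K" "Max ((\<lambda>k. mf k q) ` K) = mf k q" by blast
    have kmax: "mf j q \<le> mf k q" if "j \<in> K" for j
      using k(2) Max_ge[of "(\<lambda>k. mf k q) ` K" "mf j q"] finK that by auto
    have "(\<Sum>j\<in>K. l j * mf j q) \<le> (\<Sum>j\<in>K. l j * mf k q)"
      by (rule sum_mono) (use l0 kmax in \<open>auto intro: mult_left_mono\<close>)
    also have "\<dots> = mf k q" using l1 by (simp add: sum_distrib_right[symmetric])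
    finally have "(\<Sum>j\<in>K. l j * mf j q) \<le> mf k q" .
    moreover have "(\<Sum>j\<in>K. l j * mf j q) = m + (norm (q - q0))\<^sup>2"
      unfolding Sq mval
      by (simp add: power2_norm_eq_inner inner_diff_left inner_diff_right inner_commute algebra_simps)
    ultimately show ?thesis using k(1) KF by auto
  qed
  show ?thesis using mle0 final \<phi>ge m_def by blast
qed

lemma monotone_set_point:
  fixes M :: "('a::{real_inner,complete_space} \<times> 'a) set"
  assumes mono: "\<And>k j. k \<in> M \<Longrightarrow> j \<in> M \<Longrightarrow> 0 \<le> inner (fst k - fst j) (snd k - snd j)"
  shows "\<exists>q. \<forall>k\<in>M. mf k q \<le> 0"
proof (cases "M = {}")
  case True then show ?thesis by auto
next
  case Mne: False
  define P where "P F q m \<longleftrightarrow> finite F \<and> F \<noteq> {} \<and> F \<subseteq> M \<and> m \<le> 0 \<and> (\<forall>k\<in>F. mf k q \<le> m)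
      \<and> (\<forall>q'. \<exists>k\<in>F. m + (norm (q' - q))\<^sup>2 \<le> mf k q')" for F q m
  have KL: "\<exists>q m. P F q m" if "finite F" "F \<noteq> {}" "F \<subseteq> M" for F
    using finite_KL[of F] that mono unfolding P_def by blast
  have cmp: "m + (norm (q' - q))\<^sup>2 \<le> m'" if "P F q m" "P G q' m'" "F \<subseteq> G" for F G q q' m m'
  proof -
    from that(1) have "\<exists>k\<in>F. m + (norm (q' - q))\<^sup>2 \<le> mf k q'" unfolding P_def by blast
    then obtain k where "k \<in> F" "m + (norm (q' - q))\<^sup>2 \<le> mf k q'" by blast
    moreover have "mf k q' \<le> m'" using that(2,3) \<open>k \<in> F\<close> unfolding P_def by blast
    ultimately show ?thesis by linarith
  qed
  define V where "V = {m. \<exists>F q. P F q m}"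
  obtain k0 where k0: "k0 \<in> M" using Mne by auto
  have Vne: "V \<noteq> {}" using KL[of "{k0}"] k0 unfolding V_def by auto
  have Vbdd: "bdd_above V" unfolding V_def P_def by (auto intro!: bdd_aboveI[where M=0])
  define s where "s = Sup V"
  have "\<exists>F. \<exists>q m. P F q m \<and> s - 1/real (Suc n) < m" for n
  proof -
    have "s - 1/real (Suc n) < s" by simp
    then obtain m where "m \<in> V" "s - 1/real (Suc n) < m"
      using less_cSup_iff[OF Vne Vbdd] unfolding s_def by blast
    then show ?thesis unfolding V_def by blast
  qed
  then obtain Fs where Fs: "\<And>n. \<exists>q m. P (Fs n) q m \<and> s - 1/real (Suc n) < m" by metis
  define G where "G n = (\<Union>i\<le>n. Fs i)" for n
  have PFs: "finite (Fs n) \<and> Fs n \<noteq> {} \<and> Fs n \<subseteq> M" for n using Fs[of n] unfolding P_def by blast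
  have Gok: "finite (G n)" "G n \<noteq> {}" "G n \<subseteq> M" for n
    using PFs unfolding G_def by auto
  have "\<exists>q m. P (G n) q m" for n using KL[OF Gok(1) Gok(2) Gok(3)] .
  then obtain qs ms where qm: "\<And>n. P (G n) (qs n) (ms n)" by metis
  have msV: "ms n \<le> s" for n unfolding s_def by (rule cSup_upper[OF _ Vbdd]) (use qm in \<open>auto simp: V_def\<close>)
  have mslow: "s - 1/real (Suc n) < ms n" for n
  proof -
    obtain q m where "P (Fs n) q m" "s - 1/real (Suc n) < m" using Fs[of n] by blast
    moreover have "m + (norm (qs n - q))\<^sup>2 \<le> ms n"
      by (rule cmp[OF \<open>P (Fs n) q m\<close> qm]) (auto simp: G_def)
    ultimately show ?thesis using zero_le_power2[of "norm (qs n - q)"] by linarith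
  qed
  have Gmono: "G n \<subseteq> G n'" if "n \<le> n'" for n n' using that unfolding G_def by (intro UN_mono) auto
  have close: "(norm (qs n' - qs n))\<^sup>2 < 1/real (Suc n)" if "n \<le> n'" for n n'
    using cmp[OF qm[of n] qm[of n'] Gmono[OF that]] msV[of n'] mslow[of n] by linarith
  have close2: "(norm (qs n' - qs n))\<^sup>2 < 1/real (Suc N)" if "N \<le> n" "N \<le> n'" for n n' N
  proof (cases "n \<le> n'")
    case True
    then have "(norm (qs n' - qs n))\<^sup>2 < 1/real (Suc n)" by (rule close)
    also have "\<dots> \<le> 1/real (Suc N)" using that by (simp add: frac_le)
    finally show ?thesis .
  next
    case False
    then have "(norm (qs n - qs n'))\<^sup>2 < 1/real (Suc n')" by (intro close) simp
    also have "\<dots> \<le> 1/real (Suc N)" using that by (simp add: frac_le)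
    finally show ?thesis by (simp add: norm_minus_commute)
  qed
  have "Cauchy qs"
  proof (rule metric_CauchyI)
    fix e :: real assume e: "e > 0"
    obtain N :: nat where N: "1 / e\<^sup>2 < real N" using reals_Archimedean2 by blast
    have NN: "1 / real (Suc N) < e\<^sup>2"
    proof -
      have "1 < e\<^sup>2 * real N" using N e by (simp add: field_simps)
      also have "\<dots> \<le> e\<^sup>2 * real (Suc N)" using e by simp
      finally show ?thesis by (simp add: field_simps)
    qed
    show "\<exists>M. \<forall>m\<ge>M. \<forall>n\<ge>M. dist (qs m) (qs n) < e"
    proof (intro exI allI impI)
      fix m n assume "m \<ge> N" "n \<ge> N"
      then have "(dist (qs m) (qs n))\<^sup>2 < e\<^sup>2" using close2[of N n m] NN by (simp add: dist_norm)
      then show "dist (qs m) (qs n) < e" using e by (simp add: power_less_imp_less_base)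
    qed
  qed
  then obtain qstar where qstar: "qs \<longlonglongrightarrow> qstar" using Cauchy_convergent_iff convergent_def by blast
  have "mf k qstar \<le> 0" if k: "k \<in> M" for k
  proof -
    have "\<exists>q m. P (insert k (G n)) q m" for n
      by (rule KL) (use Gok k in auto)
    then obtain qs' ms' where qm': "\<And>n. P (insert k (G n)) (qs' n) (ms' n)" by metis
    have ms'V: "ms' n \<le> s" for n unfolding s_def by (rule cSup_upper[OF _ Vbdd]) (use qm' in \<open>auto simp: V_def\<close>)
    have nb: "norm (qs' n - qs n) \<le> sqrt (inverse (real (Suc n)))" for n
    proof -
      have "(norm (qs' n - qs n))\<^sup>2 < inverse (real (Suc n))"
        using cmp[OF qm[of n] qm'[of n] subset_insertI] ms'V[of n] mslow[of n]
        by (simp add: inverse_eq_divide)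
      then show ?thesis by (simp add: real_le_rsqrt less_imp_le)
    qed
    have "(\<lambda>n. sqrt (inverse (real (Suc n)))) \<longlonglongrightarrow> sqrt 0"
      using tendsto_real_sqrt[OF LIMSEQ_inverse_real_of_nat] .
    then have lim0: "(\<lambda>n. sqrt (inverse (real (Suc n)))) \<longlonglongrightarrow> 0" by simp
    have "(\<lambda>n. qs' n - qs n) \<longlonglongrightarrow> 0"
      by (rule Lim_null_comparison[OF always_eventually[OF allI[OF nb]] lim0])
    then have "(\<lambda>n. (qs' n - qs n) + qs n) \<longlonglongrightarrow> 0 + qstar" by (intro tendsto_intros qstar)
    then have "qs' \<longlonglongrightarrow> qstar" by simp
    then have lim: "(\<lambda>n. mf k (qs' n)) \<longlonglongrightarrow> mf k qstar" by (rule mf_cont)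
    have "mf k (qs' n) \<le> 0" for n using qm'[of n] unfolding P_def by auto
    then show ?thesis by (intro LIMSEQ_le_const2[OF lim]) auto
  qed
  then show ?thesis by blast
qed

lemma minty:
  fixes A :: "'a::{real_inner,complete_space} \<Rightarrow> 'a set"
  assumes mm: "maximally_monotone_op A" and g: "\<gamma> > 0"
  shows "\<exists>z. \<exists>u\<in>A z. p = z + \<gamma> *\<^sub>R u"
proof -
  have monA: "monotone_op A" using mm by (simp add: maximally_monotone_op_def)
  define M where "M = {(x, \<gamma> *\<^sub>R u - p) | x u. u \<in> A x}"
  have "\<exists>q. \<forall>k\<in>M. mf k q \<le> 0"
  proof (rule monotone_set_point)
    fix k j assume "k \<in> M" "j \<in> M"
    then obtain x u y v where kj: "k = (x, \<gamma> *\<^sub>R u - p)" "u \<in> A x" "j = (y, \<gamma> *\<^sub>R v - p)" "v \<in> A y"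
      unfolding M_def by blast
    have "0 \<le> inner (x - y) (u - v)" using monA kj unfolding monotone_op_def by blast
    then have "0 \<le> \<gamma> * inner (x - y) (u - v)" using g by simp
    also have "\<gamma> * inner (x - y) (u - v) = inner (fst k - fst j) (snd k - snd j)"
      using kj by (simp add: inner_diff_right algebra_simps)
    finally show "0 \<le> inner (fst k - fst j) (snd k - snd j)" .
  qed
  then obtain q where q: "\<And>k. k \<in> M \<Longrightarrow> mf k q \<le> 0" by blast
  define w where "w = (1/\<gamma>) *\<^sub>R (p - q)"
  have qw: "0 \<le> inner (q - x) (w - u)" if "u \<in> A x" for x u
  proof -
    have "mf (x, \<gamma> *\<^sub>R u - p) q \<le> 0" using q that unfolding M_def by blast
    then have "inner (q - x) (q + \<gamma> *\<^sub>R u - p) \<le> 0" by (simp add: mf_def algebra_simps)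
    moreover have "inner (q - x) (w - u) = - (1/\<gamma>) * inner (q - x) (q + \<gamma> *\<^sub>R u - p)"
      using g by (simp add: w_def inner_diff_right inner_add_right algebra_simps)
    ultimately show ?thesis using g by (simp add: divide_nonpos_pos)
  qed
  define B where "B y = A y \<union> (if y = q then {w} else {})" for y
  have "monotone_op B" unfolding monotone_op_def
  proof (intro allI impI)
    fix x y u v assume u: "u \<in> B x" and v: "v \<in> B y"
    show "0 \<le> inner (x - y) (u - v)"
    proof (cases "u \<in> A x")
      case uA: True
      show ?thesis
      proof (cases "v \<in> A y")
        case True then show ?thesis using uA monA unfolding monotone_op_def by blast
      next
        case False
        then have "y = q" "v = w" using v by (auto simp: B_def split: if_splits)
        then show ?thesis using qw[OF uA] by (simp add: inner_diff_left inner_diff_right)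
      qed
    next
      case False
      then have xu: "x = q" "u = w" using u by (auto simp: B_def split: if_splits)
      show ?thesis
      proof (cases "v \<in> A y")
        case True then show ?thesis using qw[OF True] xu by simp
      next
        case False
        then have "y = q" "v = w" using v by (auto simp: B_def split: if_splits)
        then show ?thesis using xu by simp
      qed
    qed
  qed
  moreover have "gra A \<subseteq> gra B" by (auto simp: gra_def B_def)
  ultimately have "gra B = gra A" using mm unfolding maximally_monotone_op_def by blast
  moreover have "(q, w) \<in> gra B" by (simp add: gra_def B_def)
  ultimately have "w \<in> A q" by (simp add: gra_def)
  moreover have "p = q + \<gamma> *\<^sub>R w" using g by (simp add: w_def)
  ultimately show ?thesis by blast
qed

lemma resolvent_eq:
  fixes A :: "'a::real_inner \<Rightarrow> 'a set"
  assumes monA: "monotone_op A" and g: "\<gamma> > 0" and u: "u \<in> A z" and p: "p = z + \<gamma> *\<^sub>R u"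
  shows "resolvent \<gamma> A p = z"
  unfolding resolvent_def
proof (rule the_equality)
  show "\<exists>u\<in>A z. p = z + \<gamma> *\<^sub>R u" using u p by blast
next
  fix z' assume "\<exists>u\<in>A z'. p = z' + \<gamma> *\<^sub>R u"
  then obtain u' where u': "u' \<in> A z'" "p = z' + \<gamma> *\<^sub>R u'" by blast
  have "0 \<le> inner (z' - z) (u' - u)" using monA u u'(1) unfolding monotone_op_def by blast
  then have "0 \<le> \<gamma> * inner (z' - z) (u' - u)" using g by simp
  also have "\<gamma> * inner (z' - z) (u' - u) = inner (z' - z) (\<gamma> *\<^sub>R u' - \<gamma> *\<^sub>R u)"
    by (simp add: inner_diff_right right_diff_distrib)
  also have "\<gamma> *\<^sub>R u' - \<gamma> *\<^sub>R u = z - z'" using p u'(2) by (simp add: algebra_simps)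
  also have "inner (z' - z) (z - z') = - (norm (z' - z))\<^sup>2"
    by (simp add: power2_norm_eq_inner inner_diff_left inner_diff_right inner_commute)
  finally show "z' = z" by simp
qed

lemma resolvent_spec:
  fixes A :: "'a::{real_inner,complete_space} \<Rightarrow> 'a set"
  assumes mm: "maximally_monotone_op A" and g: "\<gamma> > 0"
  shows "\<exists>u\<in>A (resolvent \<gamma> A p). p = resolvent \<gamma> A p + \<gamma> *\<^sub>R u"
proof -
  obtain z u where "u \<in> A z" "p = z + \<gamma> *\<^sub>R u" using minty[OF mm g] by blast
  moreover then have "resolvent \<gamma> A p = z"
    using resolvent_eq mm g unfolding maximally_monotone_op_def by blast
  ultimately show ?thesis by metis
qed

lemma mt_ident:
  fixes z w :: "nat \<Rightarrow> 'a::real_inner"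
  assumes "w 0 = 0"
  shows "(\<Sum>i=1..n. inner (z i + z (Suc i) + 2 *\<^sub>R w i) (z (Suc i) - z i))
         + 2 * (\<Sum>i=1..n. inner (z i) (w i - w (i - 1)))
       = (norm (z (Suc n)))\<^sup>2 - (norm (z 1))\<^sup>2 + 2 * inner (z (Suc n)) (w n)"
proof (induction n)
  case 0
  then show ?case using assms by simp
next
  case (Suc n)
  have "(\<Sum>i=1..Suc n. inner (z i + z (Suc i) + 2 *\<^sub>R w i) (z (Suc i) - z i))
         + 2 * (\<Sum>i=1..Suc n. inner (z i) (w i - w (i - 1)))
      = ((\<Sum>i=1..n. inner (z i + z (Suc i) + 2 *\<^sub>R w i) (z (Suc i) - z i))
         + 2 * (\<Sum>i=1..n. inner (z i) (w i - w (i - 1))))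
        + inner (z (Suc n) + z (Suc (Suc n)) + 2 *\<^sub>R w (Suc n)) (z (Suc (Suc n)) - z (Suc n))
        + 2 * inner (z (Suc n)) (w (Suc n) - w n)"
    by (simp add: algebra_simps)
  also have "\<dots> = (norm (z (Suc (Suc n))))\<^sup>2 - (norm (z 1))\<^sup>2 + 2 * inner (z (Suc (Suc n))) (w (Suc n))"
    unfolding Suc.IH
    by (simp add: power2_norm_eq_inner inner_add_left inner_add_right inner_diff_left inner_diff_right
        inner_commute algebra_simps)
  finally show ?case .
qed

lemma mt_ineq:
  fixes X Z U :: "nat \<Rightarrow> 'a::real_inner"
  assumes n: "n \<ge> 1" and th: "0 \<le> \<theta>"
    and r1: "X 1 = Z 1 + \<gamma> *\<^sub>R U 1"
    and rmid: "\<And>i. 2 \<le> i \<Longrightarrow> i \<le> n \<Longrightarrow> Z (i - 1) + X i - X (i - 1) = Z i + \<gamma> *\<^sub>R U i"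
    and rN: "Z 1 + Z n - X n = Z (Suc n) + \<gamma> *\<^sub>R U (Suc n)"
  shows "(\<Sum>i=1..n. (norm (X i + \<theta> *\<^sub>R (Z (Suc i) - Z i)))\<^sup>2)
     \<le> (\<Sum>i=1..n. (norm (X i))\<^sup>2) - \<theta> * (1 - \<theta>) * (\<Sum>i=1..n. (norm (Z (Suc i) - Z i))\<^sup>2)
        - 2 * \<theta> * \<gamma> * (\<Sum>i=1..Suc n. inner (Z i) (U i))"
proof -
  define W where "W i = (if i = 0 then 0 else if i = Suc n then Z 1 - Z (Suc n) else X i - Z i)" for i
  have W0: "W 0 = 0" by (simp add: W_def)
  have hW: "\<gamma> *\<^sub>R U i = W i - W (i - 1)" if "1 \<le> i" "i \<le> Suc n" for i
  proof -
    have "i = 1 \<or> (2 \<le> i \<and> i \<le> n) \<or> i = Suc n" using that n by linarith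
    then consider "i = 1" | "2 \<le> i" "i \<le> n" | "i = Suc n" by blast
    then show ?thesis
    proof cases
      case 1
      then show ?thesis using r1 n by (simp add: W_def algebra_simps)
    next
      case 2
      then have "W i = X i - Z i" "W (i - 1) = X (i - 1) - Z (i - 1)" by (auto simp: W_def)
      have "\<gamma> *\<^sub>R U i = (Z i + \<gamma> *\<^sub>R U i) - Z i" by simp
      also have "\<dots> = (Z (i - 1) + X i - X (i - 1)) - Z i" using rmid[OF 2] by simp
      also have "\<dots> = W i - W (i - 1)" unfolding \<open>W i = X i - Z i\<close> \<open>W (i - 1) = X (i - 1) - Z (i - 1)\<close>
        by (simp add: algebra_simps)
      finally show ?thesis .
    next
      case 3
      then have "W i = Z 1 - Z (Suc n)" "W (i - 1) = X n - Z n" using n by (auto simp: W_def)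
      have "\<gamma> *\<^sub>R U (Suc n) = (Z (Suc n) + \<gamma> *\<^sub>R U (Suc n)) - Z (Suc n)" by simp
      also have "\<dots> = (Z 1 + Z n - X n) - Z (Suc n)" using rN by simp
      also have "\<dots> = W i - W (i - 1)" unfolding \<open>W i = Z 1 - Z (Suc n)\<close> \<open>W (i - 1) = X n - Z n\<close>
        by (simp add: algebra_simps)
      finally show ?thesis using 3 by simp
    qed
  qed
  have XW: "X i = Z i + W i" if "1 \<le> i" "i \<le> n" for i using that by (simp add: W_def)
  define D where "D i = Z (Suc i) - Z i" for i
  have trm: "(norm (X i + \<theta> *\<^sub>R D i))\<^sup>2 = (norm (X i))\<^sup>2 - \<theta> * (1 - \<theta>) * (norm (D i))\<^sup>2
      + \<theta> * inner (Z i + Z (Suc i) + 2 *\<^sub>R W i) (Z (Suc i) - Z i)" if "1 \<le> i" "i \<le> n" for i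
  proof -
    have e: "Z i + Z (Suc i) + 2 *\<^sub>R W i = 2 *\<^sub>R X i + D i" using XW[OF that] by (simp add: D_def algebra_simps scaleR_2)
    show ?thesis unfolding e D_def[symmetric]
      by (simp add: power2_norm_eq_inner inner_add_left inner_add_right inner_commute algebra_simps)
  qed
  have sum1: "(\<Sum>i=1..n. (norm (X i + \<theta> *\<^sub>R D i))\<^sup>2) = (\<Sum>i=1..n. (norm (X i))\<^sup>2)
      - \<theta> * (1 - \<theta>) * (\<Sum>i=1..n. (norm (D i))\<^sup>2)
      + \<theta> * (\<Sum>i=1..n. inner (Z i + Z (Suc i) + 2 *\<^sub>R W i) (Z (Suc i) - Z i))"
    by (simp add: trm sum.distrib sum_subtractf sum_distrib_left)
  have sumZU: "\<gamma> * (\<Sum>i=1..Suc n. inner (Z i) (U i)) = (\<Sum>i=1..n. inner (Z i) (W i - W (i - 1)))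
       + inner (Z (Suc n)) (W (Suc n) - W n)"
  proof -
    have "\<gamma> * (\<Sum>i=1..Suc n. inner (Z i) (U i)) = (\<Sum>i=1..Suc n. inner (Z i) (\<gamma> *\<^sub>R U i))"
      unfolding sum_distrib_left by simp
    also have "\<dots> = (\<Sum>i=1..Suc n. inner (Z i) (W i - W (i - 1)))"
      by (rule sum.cong) (simp_all add: hW)
    also have "\<dots> = (\<Sum>i=1..n. inner (Z i) (W i - W (i - 1))) + inner (Z (Suc n)) (W (Suc n) - W n)"
      by simp
    finally show ?thesis .
  qed
  have WN: "W (Suc n) = Z 1 - Z (Suc n)" by (simp add: W_def)
  have id: "(\<Sum>i=1..n. inner (Z i + Z (Suc i) + 2 *\<^sub>R W i) (Z (Suc i) - Z i))
         = - (norm (Z 1 - Z (Suc n)))\<^sup>2 - 2 * (\<gamma> * (\<Sum>i=1..Suc n. inner (Z i) (U i)))"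
  proof -
    have "(\<Sum>i=1..n. inner (Z i + Z (Suc i) + 2 *\<^sub>R W i) (Z (Suc i) - Z i))
        = (norm (Z (Suc n)))\<^sup>2 - (norm (Z 1))\<^sup>2 + 2 * inner (Z (Suc n)) (W n)
          - 2 * (\<Sum>i=1..n. inner (Z i) (W i - W (i - 1)))"
      using mt_ident[of W Z n, OF W0] by linarith
    then show ?thesis unfolding sumZU WN
      by (simp add: power2_norm_eq_inner inner_add_left inner_add_right inner_diff_left inner_diff_right
        inner_commute algebra_simps)
  qed
  have "(\<Sum>i=1..n. (norm (X i + \<theta> *\<^sub>R D i))\<^sup>2) = (\<Sum>i=1..n. (norm (X i))\<^sup>2)
      - \<theta> * (1 - \<theta>) * (\<Sum>i=1..n. (norm (D i))\<^sup>2)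
      - \<theta> * (norm (Z 1 - Z (Suc n)))\<^sup>2 - 2 * \<theta> * \<gamma> * (\<Sum>i=1..Suc n. inner (Z i) (U i))"
    unfolding sum1 id by (simp add: algebra_simps)
  moreover have "0 \<le> \<theta> * (norm (Z 1 - Z (Suc n)))\<^sup>2" using th by simp
  ultimately show ?thesis unfolding D_def by linarith
qed

lemma mt_xbound:
  fixes X Z U :: "nat \<Rightarrow> 'a::real_inner"
  assumes r1: "X 1 = Z 1 + \<gamma> *\<^sub>R U 1"
    and rmid: "\<And>i. 2 \<le> i \<Longrightarrow> i \<le> n \<Longrightarrow> Z (i - 1) + X i - X (i - 1) = Z i + \<gamma> *\<^sub>R U i"
    and lip: "\<And>i. 1 \<le> i \<Longrightarrow> i \<le> n \<Longrightarrow> norm (U i) \<le> L * norm (Z i)"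
    and L: "0 \<le> L" and g: "0 < \<gamma>" "\<gamma> \<le> b"
  shows "(\<Sum>i=1..n. (norm (X i))\<^sup>2) \<le> (real n)\<^sup>2 * (1 + b * L)\<^sup>2 * (\<Sum>i=1..n. (norm (Z i))\<^sup>2)"
proof -
  have hW: "1 \<le> i \<longrightarrow> i \<le> n \<longrightarrow> norm (X i - Z i) \<le> \<gamma> * L * (\<Sum>j=1..i. norm (Z j))" for i
  proof (induction i)
    case 0 then show ?case by simp
  next
    case (Suc i)
    show ?case
    proof (intro impI)
      assume i: "1 \<le> Suc i" "Suc i \<le> n"
      show "norm (X (Suc i) - Z (Suc i)) \<le> \<gamma> * L * (\<Sum>j=1..Suc i. norm (Z j))"
      proof (cases "i = 0")
        case True
        have "norm (X 1 - Z 1) = \<gamma> * norm (U 1)" using r1 g by simp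
        also have "\<dots> \<le> \<gamma> * (L * norm (Z 1))" using lip[of 1] i True g by (intro mult_left_mono) auto
        finally show ?thesis using True by simp
      next
        case False
        have "Z i + X (Suc i) - X i = Z (Suc i) + \<gamma> *\<^sub>R U (Suc i)" using rmid[of "Suc i"] i False by simp
        then have e: "X (Suc i) - Z (Suc i) = (X i - Z i) + \<gamma> *\<^sub>R U (Suc i)"
          by (simp add: algebra_simps)
        have "norm (X (Suc i) - Z (Suc i)) \<le> norm (X i - Z i) + norm (\<gamma> *\<^sub>R U (Suc i))"
          unfolding e by (rule norm_triangle_ineq)
        also have "norm (X i - Z i) \<le> \<gamma> * L * (\<Sum>j=1..i. norm (Z j))" using Suc.IH i False by simp
        also have "norm (\<gamma> *\<^sub>R U (Suc i)) \<le> \<gamma> * (L * norm (Z (Suc i)))"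
          using lip[of "Suc i"] i g by (simp add: mult_left_mono)
        finally show ?thesis by (simp add: algebra_simps)
      qed
    qed
  qed
  define S where "S = (\<Sum>j=1..n. norm (Z j))"
  have S0: "0 \<le> S" by (simp add: S_def sum_nonneg)
  have Xb: "norm (X i) \<le> (1 + b * L) * S" if "1 \<le> i" "i \<le> n" for i
  proof -
    have s1: "(\<Sum>j=1..i. norm (Z j)) \<le> S" unfolding S_def using that by (intro sum_mono2) auto
    have s2: "norm (Z i) \<le> S" unfolding S_def using that
      by (intro member_le_sum[of i "{1..n}" "\<lambda>j. norm (Z j)"]) auto
    have "norm (X i) \<le> norm (Z i) + norm (X i - Z i)" using norm_triangle_ineq[of "Z i" "X i - Z i"] by simp
    also have "\<dots> \<le> S + \<gamma> * L * (\<Sum>j=1..i. norm (Z j))" using s2 hW[of i] that by simp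
    also have "\<gamma> * L * (\<Sum>j=1..i. norm (Z j)) \<le> b * L * S"
      using s1 g L by (intro mult_mono) (auto simp: sum_nonneg)
    finally show ?thesis by (simp add: algebra_simps)
  qed
  have "(\<Sum>i=1..n. (norm (X i))\<^sup>2) \<le> (\<Sum>i=1..n. ((1 + b * L) * S)\<^sup>2)"
    using Xb by (intro sum_mono power_mono) auto
  also have "\<dots> = real n * (1 + b * L)\<^sup>2 * S\<^sup>2" by (simp add: power_mult_distrib)
  finally have A: "(\<Sum>i=1..n. (norm (X i))\<^sup>2) \<le> real n * (1 + b * L)\<^sup>2 * S\<^sup>2" .
  have B: "S\<^sup>2 \<le> (\<Sum>i=1..n. (norm (Z i))\<^sup>2) * real n"
    unfolding S_def using sum_squared_le_sum_of_squares[of "\<lambda>j. norm (Z j)" "{1..n}"] by simp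
  have "real n * (1 + b * L)\<^sup>2 * S\<^sup>2 \<le> real n * (1 + b * L)\<^sup>2 * ((\<Sum>i=1..n. (norm (Z i))\<^sup>2) * real n)"
    by (rule mult_left_mono[OF B]) simp
  with A show ?thesis by (simp add: power2_eq_square algebra_simps)
qed

lemma zbound:
  fixes Z :: "nat \<Rightarrow> 'a::real_normed_vector"
  shows "(\<Sum>i=1..n. (norm (Z i))\<^sup>2) \<le> real n * (real n + 1) * ((norm (Z (Suc n)))\<^sup>2 + (\<Sum>i=1..n. (norm (Z (Suc i) - Z i))\<^sup>2))"
proof -
  define Y where "Y = norm (Z (Suc n)) + (\<Sum>k=1..n. norm (Z (Suc k) - Z k))"
  have Zb: "norm (Z j) \<le> Y" if "1 \<le> j" "j \<le> n" for j
  proof -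
    have "Z j = Z (Suc n) - (\<Sum>k=j..n. Z (Suc k) - Z k)" using sum_Suc_diff[of j n Z] that by simp
    then have "norm (Z j) \<le> norm (Z (Suc n)) + norm (\<Sum>k=j..n. Z (Suc k) - Z k)"
      by (metis norm_triangle_ineq4)
    also have "norm (\<Sum>k=j..n. Z (Suc k) - Z k) \<le> (\<Sum>k=j..n. norm (Z (Suc k) - Z k))" by (rule norm_sum)
    also have "\<dots> \<le> (\<Sum>k=1..n. norm (Z (Suc k) - Z k))" using that by (intro sum_mono2) auto
    finally show ?thesis by (simp add: Y_def)
  qed
  have "(\<Sum>i=1..n. (norm (Z i))\<^sup>2) \<le> (\<Sum>i=1..n. Y\<^sup>2)" using Zb by (intro sum_mono power_mono) auto
  also have "\<dots> = real n * Y\<^sup>2" by simp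
  finally have A: "(\<Sum>i=1..n. (norm (Z i))\<^sup>2) \<le> real n * Y\<^sup>2" .
  have B: "Y\<^sup>2 \<le> (real n + 1) * ((norm (Z (Suc n)))\<^sup>2 + (\<Sum>i=1..n. (norm (Z (Suc i) - Z i))\<^sup>2))"
  proof -
    define a where "a k = (if k = 0 then norm (Z (Suc n)) else norm (Z (Suc k) - Z k))" for k
    have "(\<Sum>k=0..n. a k) = a 0 + (\<Sum>k=Suc 0..n. a k)" by (rule sum.atLeast_Suc_atMost) simp
    also have "(\<Sum>k=Suc 0..n. a k) = (\<Sum>k=1..n. norm (Z (Suc k) - Z k))" by (rule sum.cong) (auto simp: a_def)
    finally have Ya: "Y = (\<Sum>k=0..n. a k)" by (simp add: Y_def a_def)
    have "(\<Sum>k=0..n. (a k)\<^sup>2) = (a 0)\<^sup>2 + (\<Sum>k=Suc 0..n. (a k)\<^sup>2)" by (rule sum.atLeast_Suc_atMost) simp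
    also have "(\<Sum>k=Suc 0..n. (a k)\<^sup>2) = (\<Sum>k=1..n. (norm (Z (Suc k) - Z k))\<^sup>2)" by (rule sum.cong) (auto simp: a_def)
    finally have Ya2: "(\<Sum>k=0..n. (a k)\<^sup>2) = (norm (Z (Suc n)))\<^sup>2 + (\<Sum>k=1..n. (norm (Z (Suc k) - Z k))\<^sup>2)"
      by (simp add: a_def)
    show ?thesis using sum_squared_le_sum_of_squares[of a "{0..n}"] unfolding Ya[symmetric] Ya2 by (simp add: algebra_simps)
  qed
  have "real n * Y\<^sup>2 \<le> real n * ((real n + 1) * ((norm (Z (Suc n)))\<^sup>2 + (\<Sum>i=1..n. (norm (Z (Suc i) - Z i))\<^sup>2)))"
    by (rule mult_left_mono[OF B]) simp
  with A show ?thesis by (simp add: algebra_simps)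
qed

lemma beta_final:
  fixes R2 E Q c K :: real
  assumes c: "0 < c" and Q: "0 \<le> Q" and K: "0 \<le> K"
    and h1: "R2 \<le> E - c * Q" and h2: "E \<le> K * Q"
  shows "R2 \<le> (1 - c / max K c) * E"
proof -
  define K' where "K' = max K c"
  have K'p: "0 < K'" using c by (simp add: K'_def)
  have "E \<le> K' * Q" using h2 Q by (smt (verit) K'_def max.cobounded1 mult_right_mono)
  then have "c / K' * E \<le> c / K' * (K' * Q)" using c K'p by (intro mult_left_mono) auto
  also have "\<dots> = c * Q" using K'p by simp
  finally have "c / K' * E \<le> c * Q" .
  then show ?thesis using h1 unfolding K'_def[symmetric] by (simp add: algebra_simps)
qed

lemma lip_mono_maximal:
  fixes f :: "'a::real_inner \<Rightarrow> 'a"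
  assumes A: "A = (\<lambda>x. {f x})" and mon: "monotone_op A" and lip: "L-lipschitz_on UNIV f"
  shows "maximally_monotone_op A"
  unfolding maximally_monotone_op_def
proof (intro conjI allI impI)
  show "monotone_op A" by (rule mon)
  fix B assume B: "monotone_op B \<and> gra A \<subseteq> gra B"
  have L0: "0 \<le> L" using lip by (simp add: lipschitz_on_def)
  have fB: "f x \<in> B x" for x
  proof -
    have "(x, f x) \<in> gra A" by (simp add: gra_def A)
    then show ?thesis using B by (auto simp: gra_def)
  qed
  show "gra B = gra A"
  proof
    show "gra B \<subseteq> gra A"
    proof
      fix p assume "p \<in> gra B"
      then obtain z w where p: "p = (z, w)" "w \<in> B z" by (auto simp: gra_def)
      define d where "d = w - f z"
      define t where "t = 1 / (2 * (L + 1))"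
      have t0: "t > 0" using L0 by (simp add: t_def)
      have Lt: "L * t \<le> 1/2" using L0 by (simp add: t_def field_simps)
      have "0 \<le> inner ((z + t *\<^sub>R d) - z) (f (z + t *\<^sub>R d) - w)"
        using B fB p(2) unfolding monotone_op_def by blast
      then have "0 \<le> t * inner d (f (z + t *\<^sub>R d) - w)" by simp
      then have h: "0 \<le> inner d (f (z + t *\<^sub>R d) - w)" using t0 by (simp add: zero_le_mult_iff)
      have e: "f (z + t *\<^sub>R d) - w = (f (z + t *\<^sub>R d) - f z) - d" by (simp add: d_def)
      have "inner d (f (z + t *\<^sub>R d) - w) = inner d (f (z + t *\<^sub>R d) - f z) - (norm d)\<^sup>2"
        unfolding e by (simp only: inner_diff_right power2_norm_eq_inner)
      moreover have "inner d (f (z + t *\<^sub>R d) - f z) \<le> norm d * norm (f (z + t *\<^sub>R d) - f z)"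
        by (rule norm_cauchy_schwarz)
      moreover have "norm (f (z + t *\<^sub>R d) - f z) \<le> L * norm (t *\<^sub>R d)"
        using lip unfolding lipschitz_on_def by (metis UNIV_I dist_norm add_diff_cancel_left')
      ultimately have "(norm d)\<^sup>2 \<le> norm d * (L * (t * norm d))"
        using h t0 by (smt (verit) mult_left_mono norm_ge_zero norm_scaleR)
      also have "\<dots> = (L * t) * (norm d)\<^sup>2" by (simp add: power2_eq_square)
      also have "\<dots> \<le> (1/2) * (norm d)\<^sup>2" using Lt by (intro mult_right_mono) auto
      finally have "d = 0" by simp
      then show "p \<in> gra A" using p by (simp add: gra_def A d_def)
    qed
    show "gra A \<subseteq> gra B" using B by blast
  qed
qed

lemma mt_facts:
  fixes A :: "nat \<Rightarrow> 'a::{real_inner,complete_space} \<Rightarrow> 'a set"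
  assumes N: "N \<ge> 2" and g: "\<gamma> > 0" and mm: "\<forall>i\<in>{1..N}. maximally_monotone_op (A i)"
  shows "\<exists>u. (\<forall>i\<in>{1..N}. u i \<in> A i (mt_z N \<gamma> A x i)) \<and>
       x 1 = mt_z N \<gamma> A x 1 + \<gamma> *\<^sub>R u 1 \<and>
       (\<forall>i. 2 \<le> i \<and> i \<le> N - 1 \<longrightarrow> mt_z N \<gamma> A x (i - 1) + x i - x (i - 1) = mt_z N \<gamma> A x i + \<gamma> *\<^sub>R u i) \<and>
       mt_z N \<gamma> A x 1 + mt_z N \<gamma> A x (N - 1) - x (N - 1) = mt_z N \<gamma> A x N + \<gamma> *\<^sub>R u N"
proof -
  define z where "z = mt_z N \<gamma> A x"
  define inp where "inp i = (if i = 1 then x 1 else if i = N then z 1 + z (N - 1) - x (N - 1)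
      else z (i - 1) + x i - x (i - 1))" for i
  have zpre: "z i = mt_zpre \<gamma> A x i" if "i \<noteq> N" for i using that by (simp add: z_def mt_z_def)
  have zres: "z i = resolvent \<gamma> (A i) (inp i)" if "1 \<le> i" "i \<le> N" for i
  proof -
    have "i = 1 \<or> i = N \<or> (2 \<le> i \<and> i \<le> N - 1)" using that by linarith
    then consider "i = 1" | "i = N" | "2 \<le> i" "i \<le> N - 1" by blast
    then show ?thesis
    proof cases
      case 1
      then show ?thesis using N zpre[of 1] by (simp add: inp_def)
    next
      case 2
      have "z N = resolvent \<gamma> (A N) (mt_zpre \<gamma> A x 1 + mt_zpre \<gamma> A x (N - 1) - x (N - 1))"
        by (simp add: z_def mt_z_def)
      also have "mt_zpre \<gamma> A x 1 = z 1" using zpre[of 1] N by simp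
      also have "mt_zpre \<gamma> A x (N - 1) = z (N - 1)" using zpre[of "N - 1"] N by simp
      finally show ?thesis using 2 N by (simp add: inp_def)
    next
      case 3
      then obtain j where j: "i = Suc j" "j \<noteq> 0" by (cases i) auto
      have "z i = mt_zpre \<gamma> A x (Suc j)" using zpre[of i] 3 N j by simp
      also have "\<dots> = resolvent \<gamma> (A (Suc j)) (mt_zpre \<gamma> A x j + x (Suc j) - x j)" using j by simp
      also have "mt_zpre \<gamma> A x j = z j" using zpre[of j] 3 j by simp
      moreover have "Suc j \<noteq> N" "Suc j \<noteq> 1" using 3 j N by linarith+
      ultimately show ?thesis using j by (simp add: inp_def)
    qed
  qed
  have "\<forall>i. \<exists>u. 1 \<le> i \<and> i \<le> N \<longrightarrow> u \<in> A i (z i) \<and> inp i = z i + \<gamma> *\<^sub>R u"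
  proof
    fix i
    show "\<exists>u. 1 \<le> i \<and> i \<le> N \<longrightarrow> u \<in> A i (z i) \<and> inp i = z i + \<gamma> *\<^sub>R u"
    proof (cases "1 \<le> i \<and> i \<le> N")
      case True
      then have "maximally_monotone_op (A i)" using mm by auto
      from resolvent_spec[OF this g, of "inp i"] True zres show ?thesis by auto
    qed auto
  qed
  then obtain u where u: "\<And>i. 1 \<le> i \<Longrightarrow> i \<le> N \<Longrightarrow> u i \<in> A i (z i) \<and> inp i = z i + \<gamma> *\<^sub>R u i"
    by metis
  have "x 1 = z 1 + \<gamma> *\<^sub>R u 1" using u[of 1] N by (simp add: inp_def)
  moreover have "z (i - 1) + x i - x (i - 1) = z i + \<gamma> *\<^sub>R u i" if "2 \<le> i" "i \<le> N - 1" for i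
  proof -
    have "i \<noteq> N" "i \<noteq> 1" "1 \<le> i" "i \<le> N" using that by linarith+
    then show ?thesis using u[of i] by (simp add: inp_def)
  qed
  moreover have "z 1 + z (N - 1) - x (N - 1) = z N + \<gamma> *\<^sub>R u N" using u[of N] N by (simp add: inp_def)
  moreover have "\<forall>i\<in>{1..N}. u i \<in> A i (z i)" using u by auto
  ultimately show ?thesis unfolding z_def by blast
qed

theorem lemma5p2:
  fixes A :: "nat \<Rightarrow> 'a::{real_inner, complete_space} \<Rightarrow> 'a set"
    and N :: nat and \<theta> \<mu> L a b :: real
  assumes "N \<ge> 2"
    and "0 < \<theta>" "\<theta> < 1"
    and "0 < a" "a \<le> b"
    and "0 < \<mu>"
    and "((\<forall>i\<in>{1..N - 1}. \<exists>f. A i = (\<lambda>x. {f x}) \<and> monotone_op (A i) \<and> L-lipschitz_on UNIV f)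
           \<and> maximally_strongly_monotone_op \<mu> (A N))
       \<or> ((\<forall>i\<in>{1..N - 1}. \<exists>f. A i = (\<lambda>x. {f x}) \<and> maximally_strongly_monotone_op \<mu> (A i)
                              \<and> L-lipschitz_on UNIV f)
           \<and> maximally_monotone_op (A N))"
  shows "\<exists>\<beta>. 0 \<le> \<beta> \<and> \<beta> < 1 \<and>
           (\<forall>\<gamma>\<in>{a..b}. \<forall>x y.
              prod_norm N (\<lambda>i. malitsky_tam N \<theta> \<gamma> A x i - malitsky_tam N \<theta> \<gamma> A y i)
                \<le> \<beta> * prod_norm N (\<lambda>i. x i - y i))"
proof -
  note N2 = assms(1) and th = assms(2,3) and ab = assms(4,5) and mu = assms(6) and hyp = assms(7)
  define n where "n = N - 1"
  have n1: "n \<ge> 1" and Nn: "N = Suc n" using N2 by (auto simp: n_def)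
  have mm: "\<forall>i\<in>{1..N}. maximally_monotone_op (A i)"
  proof
    fix i assume i: "i \<in> {1..N}"
    show "maximally_monotone_op (A i)"
    proof (cases "i = N")
      case True
      then show ?thesis using hyp by (auto simp: maximally_strongly_monotone_op_def)
    next
      case False
      then have i': "i \<in> {1..N - 1}" using i by auto
      from hyp show ?thesis
      proof
        assume h: "(\<forall>i\<in>{1..N - 1}. \<exists>f. A i = (\<lambda>x. {f x}) \<and> monotone_op (A i) \<and> L-lipschitz_on UNIV f)
           \<and> maximally_strongly_monotone_op \<mu> (A N)"
        then obtain f where "A i = (\<lambda>x. {f x})" "monotone_op (A i)" "L-lipschitz_on UNIV f" using i' by blast
        then show ?thesis by (intro lip_mono_maximal)
      next
        assume h: "(\<forall>i\<in>{1..N - 1}. \<exists>f. A i = (\<lambda>x. {f x}) \<and> maximally_strongly_monotone_op \<mu> (A i)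
                              \<and> L-lipschitz_on UNIV f) \<and> maximally_monotone_op (A N)"
        then show ?thesis using i' by (auto simp: maximally_strongly_monotone_op_def)
      qed
    qed
  qed
  have lipf: "\<exists>f. A i = (\<lambda>x. {f x}) \<and> L-lipschitz_on UNIV f" if "i \<in> {1..N - 1}" for i
    using hyp that by blast
  have L0: "0 \<le> L"
  proof -
    have "(1::nat) \<in> {1..N - 1}" using N2 by auto
    then obtain f :: "'a \<Rightarrow> 'a" where "L-lipschitz_on UNIV f" using lipf[of 1] by blast
    then show ?thesis by (simp add: lipschitz_on_def)
  qed
  have smode: "strongly_monotone_op \<mu> (A N) \<or> (\<forall>i\<in>{1..N - 1}. strongly_monotone_op \<mu> (A i))"
    using hyp by (auto simp: maximally_strongly_monotone_op_def)
  define c where "c = \<theta> * min (1 - \<theta>) (2 * a * \<mu>)"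
  define K where "K = real n ^ 3 * (real n + 1) * (1 + b * L)\<^sup>2"
  define \<beta> where "\<beta> = sqrt (1 - c / max K c)"
  have c0: "0 < c" using th ab mu by (simp add: c_def)
  have c1: "c \<le> \<theta> * (1 - \<theta>)" using th by (simp add: c_def)
  have c2: "c \<le> \<theta> * (2 * a * \<mu>)" using th by (simp add: c_def)
  have K0: "0 \<le> K" by (simp add: K_def)
  have cK: "0 < c / max K c" "c / max K c \<le> 1" using c0 by auto
  show ?thesis
  proof (intro exI[of _ \<beta>] conjI ballI allI)
    show "0 \<le> \<beta>" using cK by (simp add: \<beta>_def)
    show "\<beta> < 1" using cK by (simp add: \<beta>_def)
    fix \<gamma> x y assume "\<gamma> \<in> {a..b}"
    then have ga: "a \<le> \<gamma>" "\<gamma> \<le> b" by auto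
    have g: "0 < \<gamma>" using ga ab by linarith
    show "prod_norm N (\<lambda>i. malitsky_tam N \<theta> \<gamma> A x i - malitsky_tam N \<theta> \<gamma> A y i)
                \<le> \<beta> * prod_norm N (\<lambda>i. x i - y i)"
    proof -
      obtain ux where ux: "\<forall>i\<in>{1..N}. ux i \<in> A i (mt_z N \<gamma> A x i)"
        "x 1 = mt_z N \<gamma> A x 1 + \<gamma> *\<^sub>R ux 1"
        "\<forall>i. 2 \<le> i \<and> i \<le> N - 1 \<longrightarrow> mt_z N \<gamma> A x (i - 1) + x i - x (i - 1) = mt_z N \<gamma> A x i + \<gamma> *\<^sub>R ux i"
        "mt_z N \<gamma> A x 1 + mt_z N \<gamma> A x (N - 1) - x (N - 1) = mt_z N \<gamma> A x N + \<gamma> *\<^sub>R ux N"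
        using mt_facts[OF N2 g mm, of x] by blast
      obtain uy where uy: "\<forall>i\<in>{1..N}. uy i \<in> A i (mt_z N \<gamma> A y i)"
        "y 1 = mt_z N \<gamma> A y 1 + \<gamma> *\<^sub>R uy 1"
        "\<forall>i. 2 \<le> i \<and> i \<le> N - 1 \<longrightarrow> mt_z N \<gamma> A y (i - 1) + y i - y (i - 1) = mt_z N \<gamma> A y i + \<gamma> *\<^sub>R uy i"
        "mt_z N \<gamma> A y 1 + mt_z N \<gamma> A y (N - 1) - y (N - 1) = mt_z N \<gamma> A y N + \<gamma> *\<^sub>R uy N"
        using mt_facts[OF N2 g mm, of y] by blast
      define zx where "zx = mt_z N \<gamma> A x"
      define zy where "zy = mt_z N \<gamma> A y"
      define X where "X i = x i - y i" for i
      define Z where "Z i = zx i - zy i" for i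
      define U where "U i = ux i - uy i" for i
      have r1: "X 1 = Z 1 + \<gamma> *\<^sub>R U 1"
      proof -
        have "X 1 = (zx 1 + \<gamma> *\<^sub>R ux 1) - (zy 1 + \<gamma> *\<^sub>R uy 1)"
          unfolding X_def zx_def zy_def using ux(2) uy(2) by simp
        also have "\<dots> = Z 1 + \<gamma> *\<^sub>R U 1" by (simp add: Z_def U_def algebra_simps)
        finally show ?thesis .
      qed
      have rmid: "Z (i - 1) + X i - X (i - 1) = Z i + \<gamma> *\<^sub>R U i" if "2 \<le> i" "i \<le> n" for i
      proof -
        have i: "2 \<le> i \<and> i \<le> N - 1" using that by (simp add: n_def)
        have "Z (i - 1) + X i - X (i - 1) = (zx (i - 1) + x i - x (i - 1)) - (zy (i - 1) + y i - y (i - 1))"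
          by (simp add: Z_def X_def algebra_simps)
        also have "\<dots> = (zx i + \<gamma> *\<^sub>R ux i) - (zy i + \<gamma> *\<^sub>R uy i)"
          using ux(3) uy(3) i unfolding zx_def zy_def by simp
        also have "\<dots> = Z i + \<gamma> *\<^sub>R U i" by (simp add: Z_def U_def algebra_simps)
        finally show ?thesis .
      qed
      have rN: "Z 1 + Z n - X n = Z (Suc n) + \<gamma> *\<^sub>R U (Suc n)"
      proof -
        have "Z 1 + Z n - X n = (zx 1 + zx (N - 1) - x (N - 1)) - (zy 1 + zy (N - 1) - y (N - 1))"
          by (simp add: Z_def X_def n_def algebra_simps)
        also have "\<dots> = (zx N + \<gamma> *\<^sub>R ux N) - (zy N + \<gamma> *\<^sub>R uy N)"
          using ux(4) uy(4) unfolding zx_def zy_def by simp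
        also have "\<dots> = Z (Suc n) + \<gamma> *\<^sub>R U (Suc n)" by (simp add: Z_def U_def Nn algebra_simps)
        finally show ?thesis .
      qed
      have th0: "0 \<le> \<theta>" using th by simp
      define E where "E = (\<Sum>i=1..n. (norm (X i))\<^sup>2)"
      define R2 where "R2 = (\<Sum>i=1..n. (norm (X i + \<theta> *\<^sub>R (Z (Suc i) - Z i)))\<^sup>2)"
      define DD where "DD = (\<Sum>i=1..n. (norm (Z (Suc i) - Z i))\<^sup>2)"
      define SI where "SI = (\<Sum>i=1..Suc n. inner (Z i) (U i))"
      have ineq: "R2 \<le> E - \<theta> * (1 - \<theta>) * DD - 2 * \<theta> * \<gamma> * SI"
        unfolding R2_def E_def DD_def SI_def by (rule mt_ineq[OF n1 th0 r1 rmid rN])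
      have Tdiff: "malitsky_tam N \<theta> \<gamma> A x i - malitsky_tam N \<theta> \<gamma> A y i = X i + \<theta> *\<^sub>R (Z (Suc i) - Z i)"
        if "i \<in> {1..n}" for i
        using that unfolding malitsky_tam_def X_def Z_def zx_def zy_def n_def
        by (simp add: algebra_simps)
      have pnT: "prod_norm N (\<lambda>i. malitsky_tam N \<theta> \<gamma> A x i - malitsky_tam N \<theta> \<gamma> A y i) = sqrt R2"
        unfolding prod_norm_def R2_def n_def[symmetric] by (simp add: Tdiff)
      have pnX: "prod_norm N (\<lambda>i. x i - y i) = sqrt E"
        unfolding prod_norm_def E_def n_def[symmetric] X_def by simp
      have lipU: "norm (U i) \<le> L * norm (Z i)" if "1 \<le> i" "i \<le> n" for i
      proof -
        have i: "i \<in> {1..N - 1}" using that by (simp add: n_def)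
        then obtain f :: "'a \<Rightarrow> 'a" where f: "A i = (\<lambda>x. {f x})" "L-lipschitz_on UNIV f" using lipf by blast
        have "i \<in> {1..N}" using i by auto
        then have "ux i \<in> A i (zx i)" "uy i \<in> A i (zy i)" using ux(1) uy(1) unfolding zx_def zy_def by blast+
        then have "ux i = f (zx i)" "uy i = f (zy i)" using f(1) by auto
        then have "norm (U i) = dist (f (zx i)) (f (zy i))" by (simp add: U_def dist_norm)
        also have "\<dots> \<le> L * dist (zx i) (zy i)" using f(2) unfolding lipschitz_on_def by blast
        finally show ?thesis by (simp add: Z_def dist_norm)
      qed
      have monoZU: "0 \<le> inner (Z i) (U i)" if "i \<in> {1..N}" for i
      proof -
        have "monotone_op (A i)" using mm that by (simp add: maximally_monotone_op_def)
        then show ?thesis using ux(1) uy(1) that unfolding monotone_op_def Z_def U_def zx_def zy_def by blast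
      qed
      have xb: "E \<le> (real n)\<^sup>2 * (1 + b * L)\<^sup>2 * (\<Sum>i=1..n. (norm (Z i))\<^sup>2)"
        unfolding E_def by (rule mt_xbound[OF r1 rmid lipU L0 g ga(2)])
      have DD0: "0 \<le> DD" by (simp add: DD_def sum_nonneg)
      have SIsplit: "SI = (\<Sum>i=1..n. inner (Z i) (U i)) + inner (Z (Suc n)) (U (Suc n))"
        by (simp add: SI_def)
      have SIn0: "0 \<le> (\<Sum>i=1..n. inner (Z i) (U i))"
        using monoZU by (intro sum_nonneg) (auto simp: Nn)
      have last0: "0 \<le> inner (Z (Suc n)) (U (Suc n))" using monoZU[of "Suc n"] by (simp add: Nn)
      have tg: "0 \<le> 2 * \<theta> * \<gamma>" using th g by simp
      have cg: "c \<le> \<theta> * (2 * \<gamma> * \<mu>)"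
        using c2 th ga mu by (smt (verit) mult_left_mono mult_right_mono)
      obtain Q where Q0: "0 \<le> Q" and hQ1: "R2 \<le> E - c * Q" and hQ2: "E \<le> K * Q"
      proof (cases "strongly_monotone_op \<mu> (A N)")
        case True
        have sN: "\<mu> * (norm (Z (Suc n)))\<^sup>2 \<le> inner (Z (Suc n)) (U (Suc n))"
          using True ux(1) uy(1) N2 unfolding strongly_monotone_op_def Z_def U_def zx_def zy_def Nn
          by (simp add: Nn[symmetric])
        define Q where "Q = (norm (Z (Suc n)))\<^sup>2 + DD"
        have "2 * \<theta> * \<gamma> * (\<mu> * (norm (Z (Suc n)))\<^sup>2) \<le> 2 * \<theta> * \<gamma> * SI"
          using sN SIn0 SIsplit tg by (intro mult_left_mono) auto
        moreover have "c * (norm (Z (Suc n)))\<^sup>2 \<le> (\<theta> * (2 * \<gamma> * \<mu>)) * (norm (Z (Suc n)))\<^sup>2"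
          using cg by (intro mult_right_mono) auto
        moreover have "c * DD \<le> \<theta> * (1 - \<theta>) * DD" using c1 DD0 by (intro mult_right_mono) auto
        ultimately have "R2 \<le> E - c * Q" using ineq unfolding Q_def by (simp add: algebra_simps)
        moreover have "E \<le> K * Q"
        proof -
          have "(\<Sum>i=1..n. (norm (Z i))\<^sup>2) \<le> real n * (real n + 1) * Q" unfolding Q_def DD_def by (rule zbound)
          then have "(real n)\<^sup>2 * (1 + b * L)\<^sup>2 * (\<Sum>i=1..n. (norm (Z i))\<^sup>2) \<le> (real n)\<^sup>2 * (1 + b * L)\<^sup>2 * (real n * (real n + 1) * Q)"
            by (intro mult_left_mono) auto
          then show ?thesis using xb unfolding K_def by (simp add: power2_eq_square power3_eq_cube algebra_simps)
        qed
        moreover have "0 \<le> Q" using DD0 by (simp add: Q_def)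
        ultimately show ?thesis using that by blast
      next
        case False
        then have sI: "\<forall>i\<in>{1..N - 1}. strongly_monotone_op \<mu> (A i)" using smode by blast
        define Q where "Q = (\<Sum>i=1..n. (norm (Z i))\<^sup>2)"
        have "\<mu> * (norm (Z i))\<^sup>2 \<le> inner (Z i) (U i)" if "i \<in> {1..n}" for i
        proof -
          have "i \<in> {1..N - 1}" "i \<in> {1..N}" using that by (auto simp: n_def)
          then show ?thesis using sI ux(1) uy(1) unfolding strongly_monotone_op_def Z_def U_def zx_def zy_def
            by blast
        qed
        then have "\<mu> * Q \<le> (\<Sum>i=1..n. inner (Z i) (U i))" unfolding Q_def sum_distrib_left
          by (intro sum_mono) auto
        then have "\<mu> * Q \<le> SI" using SIsplit last0 by linarith
        then have "2 * \<theta> * \<gamma> * (\<mu> * Q) \<le> 2 * \<theta> * \<gamma> * SI" using tg by (intro mult_left_mono) auto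
        moreover have Q0: "0 \<le> Q" by (simp add: Q_def sum_nonneg)
        moreover have "c * Q \<le> (\<theta> * (2 * \<gamma> * \<mu>)) * Q" using cg Q0 by (intro mult_right_mono) auto
        moreover have "0 \<le> \<theta> * (1 - \<theta>) * DD" using th DD0 by simp
        ultimately have "R2 \<le> E - c * Q" using ineq by (simp add: algebra_simps)
        moreover have "E \<le> K * Q"
        proof -
          have "(real n)\<^sup>2 \<le> real n ^ 3 * (real n + 1)"
          proof -
            have rn: "1 \<le> real n" using n1 by simp
            have "1 * 1 \<le> real n * (real n + 1)" using rn by (intro mult_mono) auto
            then have "(real n)\<^sup>2 * 1 \<le> (real n)\<^sup>2 * (real n * (real n + 1))"
              by (intro mult_left_mono) auto
            then show ?thesis by (simp add: power2_eq_square power3_eq_cube algebra_simps)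
          qed
          then have "(real n)\<^sup>2 * ((1 + b * L)\<^sup>2 * Q) \<le> real n ^ 3 * (real n + 1) * ((1 + b * L)\<^sup>2 * Q)"
            using Q0 by (intro mult_right_mono) auto
          then show ?thesis using xb unfolding K_def Q_def[symmetric] by (simp add: algebra_simps)
        qed
        ultimately show ?thesis using that Q0 by blast
      qed
      have "R2 \<le> (1 - c / max K c) * E" by (rule beta_final[OF c0 Q0 K0 hQ1 hQ2])
      then have "sqrt R2 \<le> sqrt ((1 - c / max K c) * E)" by (rule real_sqrt_le_mono)
      also have "\<dots> = \<beta> * sqrt E" by (simp add: \<beta>_def real_sqrt_mult)
      finally show ?thesis unfolding pnT pnX .
    qed
  qed
qed

end
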